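(* (1) The map $I \mapsto \underline{M}(I)$ is a bijection between tropical ideals $I \subset \mathbb{B}[x_1^{\pm1},\dots,x_n^{\pm1}]$ and finitary matroids on $\mathbb{Z}^n$ that are invariant under the action of $\mathbb{Z}^n$ by translation. (2) Consequently, for every $d\ge 1$, the map $I \mapsto \mathcal{H}(\underline{M}(I))$ is a bijection between paving tropical ideals of degree $d+1$ in $\mathbb{B}[x_1^{\pm1},\dots,x_n^{\pm1}]$ and $d$-partitions of $\mathbb{Z}^n$ that are invariant under the action of $\mathbb{Z}^n$.
   Context: The Boolean semiring is $\mathbb{B}=\{\infty,0\}$ with addition $\oplus=\min$ and multiplication $+$. For $f=\bigoplus_{\mathbf u\in\mathbb{Z}^n} c_{\mathbf u}\mathbf x^{\mathbf u}\in\mathbb{B}[x_1^{\pm1},\dots,x_n^{\pm1}]$, $\operatorname{supp}(f)=\{\mathbf u: c_{\mathbf u}\neq\infty\}$. An ideal $I$ is a tropical ideal if for all $f,g\in I$ and $\mathbf u\in\operatorname{supp}(f)\cap\operatorname{supp}(g)$ there is $h\in I$ with $\operatorname{supp}(f)\,\Delta\,\operatorname{supp}(g)\subset\operatorname{supp}(h)\subset(\operatorname{supp}(f)\cup\operatorname{supp}(g))\setminus\{\mathbf u\}$. The underlying matroid $\underline{M}(I)$ is the finitary matroid on $\mathbb{Z}^n$ in which a set is independent iff it contains the support of no polynomial of $I$ (its circuits are the minimal supports of polynomials in $I$). A finitary matroid on a set $E$: nonempty collection of independent sets closed under subsets, satisfying augmentation, with a set independent whenever all its finite subsets are. A tropical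 ideal is zero-dimensional of degree $r$ iff $\underline{M}(I)$ has finite rank $r$ (equivalent to the Hilbert-polynomial definition). A zero-dimensional tropical ideal $I$ is a paving tropical ideal if $\underline{M}(I)$ is a paving matroid, i.e. all circuits have size $\deg(I)$ or $\deg(I)+1$. A hyperplane of a finite-rank matroid $M$ is a maximal subset of rank $\operatorname{rank}(M)-1$; $\mathcal{H}(M)$ is the set of hyperplanes. A $d$-partition of a set $E$ ($|E|\ge d+1$) is a collection $\mathcal P$ of subsets (blocks) with $|\mathcal P|\ge2$, every block of size $\ge d$, and every $d$-subset of $E$ contained in exactly one block. $\mathbb{Z}^n$ acts on subsets by $\mathbf u+S=\{\mathbf u+\mathbf v:\mathbf v\in S\}$, on collections by $\mathbf u+\mathcal P=\{\mathbf u+S:S\in\mathcal P\}$, and similarly on matroids on $\mathbb{Z}^n$; invariance means fixed by every $\mathbf u\in\mathbb{Z}^n$. *)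

theory Defs
  imports "HOL-Analysis.Finite_Cartesian_Product"
begin

text \<open>Exponent lattice Z^n is modelled as int^'n (n = CARD('n) >= 1).
A polynomial of B[x_1^{+-1},...,x_n^{+-1}] has all coefficients in {infinity,0};
it is therefore identified with its support, a finite subset of Z^n.
The zero polynomial (all coefficients infinity) is the empty set.
Tropical addition (min) is union of supports; tropical multiplication
(coefficientwise +, then min) gives the Minkowski sum of supports.\<close>

type_synonym 'n lpoly = "(int ^ ('n::finite)) set"

definition bpoly :: "('n::finite) lpoly \<Rightarrow> bool" where
  "bpoly f \<longleftrightarrow> finite f"

definition supp :: "('n::finite) lpoly \<Rightarrow> (int ^ 'n) set" where
  "supp f = f"

definition poly_add :: "('n::finite) lpoly \<Rightarrow> 'n lpoly \<Rightarrow> 'n lpoly" where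
  "poly_add f g = f \<union> g"

definition poly_mult :: "('n::finite) lpoly \<Rightarrow> 'n lpoly \<Rightarrow> 'n lpoly" where
  "poly_mult f g = {u + v | u v. u \<in> f \<and> v \<in> g}"

definition semiring_ideal :: "('n::finite) lpoly set \<Rightarrow> bool" where
  "semiring_ideal I \<longleftrightarrow> I \<noteq> {} \<and> (\<forall>f\<in>I. bpoly f)
     \<and> (\<forall>f\<in>I. \<forall>g\<in>I. poly_add f g \<in> I)
     \<and> (\<forall>f\<in>I. \<forall>g. bpoly g \<longrightarrow> poly_mult g f \<in> I)"

definition tropical_ideal :: "('n::finite) lpoly set \<Rightarrow> bool" where
  "tropical_ideal I \<longleftrightarrow> semiring_ideal I \<and>
     (\<forall>f\<in>I. \<forall>g\<in>I. \<forall>u \<in> supp f \<inter> supp g. \<exists>h\<in>I.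
        (supp f - supp g) \<union> (supp g - supp f) \<subseteq> supp h \<and>
        supp h \<subseteq> (supp f \<union> supp g) - {u})"

text \<open>Matroids are represented by their family of independent sets.\<close>
definition finitary_matroid :: "'a set set \<Rightarrow> bool" where
  "finitary_matroid Ind \<longleftrightarrow> Ind \<noteq> {}
     \<and> (\<forall>X\<in>Ind. \<forall>Y. Y \<subseteq> X \<longrightarrow> Y \<in> Ind)
     \<and> (\<forall>X\<in>Ind. \<forall>Y\<in>Ind. finite X \<and> finite Y \<and> card X < card Y \<longrightarrow>
          (\<exists>y\<in>Y - X. insert y X \<in> Ind))
     \<and> (\<forall>X. (\<forall>F. F \<subseteq> X \<and> finite F \<longrightarrow> F \<in> Ind) \<longrightarrow> X \<in> Ind)"

definition underlying_matroid :: "('n::finite) lpoly set \<Rightarrow> (int ^ 'n) set set" where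
  "underlying_matroid I = {S. \<forall>f\<in>I. supp f \<noteq> {} \<longrightarrow> \<not> supp f \<subseteq> S}"

definition translate :: "int ^ ('n::finite) \<Rightarrow> (int ^ 'n) set \<Rightarrow> (int ^ 'n) set" where
  "translate u S = (\<lambda>v. u + v) ` S"

definition translation_invariant :: "(int ^ ('n::finite)) set set \<Rightarrow> bool" where
  "translation_invariant \<C> \<longleftrightarrow> (\<forall>u. translate u ` \<C> = \<C>)"

definition circuits :: "'a set set \<Rightarrow> 'a set set" where
  "circuits Ind = {C. C \<notin> Ind \<and> (\<forall>x\<in>C. C - {x} \<in> Ind)}"

definition has_rank :: "'a set set \<Rightarrow> nat \<Rightarrow> bool" where
  "has_rank Ind r \<longleftrightarrow> (\<forall>X\<in>Ind. finite X \<and> card X \<le> r) \<and> (\<exists>X\<in>Ind. finite X \<and> card X = r)"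

text \<open>Rank of a subset (meaningful for finite-rank matroids).\<close>
definition mrank :: "'a set set \<Rightarrow> 'a set \<Rightarrow> nat" where
  "mrank Ind X = Sup {card Y | Y. Y \<subseteq> X \<and> Y \<in> Ind}"

definition hyperplanes :: "'a set set \<Rightarrow> 'a set set" where
  "hyperplanes Ind = {H. mrank Ind H = mrank Ind UNIV - 1 \<and>
       (\<forall>H'. H \<subset> H' \<longrightarrow> mrank Ind H' \<noteq> mrank Ind UNIV - 1)}"

definition zero_dim_of_degree :: "('n::finite) lpoly set \<Rightarrow> nat \<Rightarrow> bool" where
  "zero_dim_of_degree I r \<longleftrightarrow> tropical_ideal I \<and> has_rank (underlying_matroid I) r"

definition paving_tropical_ideal_of_degree :: "('n::finite) lpoly set \<Rightarrow> nat \<Rightarrow> bool" where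
  "paving_tropical_ideal_of_degree I r \<longleftrightarrow> zero_dim_of_degree I r \<and>
     (\<forall>C \<in> circuits (underlying_matroid I). finite C \<and> (card C = r \<or> card C = r + 1))"

definition d_partition :: "nat \<Rightarrow> 'a set \<Rightarrow> 'a set set \<Rightarrow> bool" where
  "d_partition d E P \<longleftrightarrow> (infinite E \<or> card E \<ge> d + 1)
     \<and> (\<forall>B\<in>P. B \<subseteq> E)
     \<and> (\<exists>A\<in>P. \<exists>B\<in>P. A \<noteq> B)
     \<and> (\<forall>B\<in>P. infinite B \<or> card B \<ge> d)
     \<and> (\<forall>S. S \<subseteq> E \<and> finite S \<and> card S = d \<longrightarrow> (\<exists>!B. B \<in> P \<and> S \<subseteq> B))"

end

theory Submission
  imports Defs
begin


lemma fm_empty: "finitary_matroid M \<Longrightarrow> {} \<in> M"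
  unfolding finitary_matroid_def by blast
lemma fm_sub: "finitary_matroid M \<Longrightarrow> X \<in> M \<Longrightarrow> Y \<subseteq> X \<Longrightarrow> Y \<in> M"
  unfolding finitary_matroid_def by blast
lemma fm_aug: "finitary_matroid M \<Longrightarrow> X \<in> M \<Longrightarrow> Y \<in> M \<Longrightarrow> finite X \<Longrightarrow> finite Y
   \<Longrightarrow> card X < card Y \<Longrightarrow> \<exists>y\<in>Y - X. insert y X \<in> M"
  unfolding finitary_matroid_def by blast
lemma fm_fin: "finitary_matroid M \<Longrightarrow> (\<And>F. F \<subseteq> X \<Longrightarrow> finite F \<Longrightarrow> F \<in> M) \<Longrightarrow> X \<in> M"
  unfolding finitary_matroid_def by blast

lemma dep_contains_circuit:
  assumes M: "finitary_matroid M"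
  shows "finite X \<Longrightarrow> X \<notin> M \<Longrightarrow> \<exists>C\<in>circuits M. C \<subseteq> X"
proof (induction "card X" arbitrary: X rule: less_induct)
  case less
  show ?case
  proof (cases "\<forall>x\<in>X. X - {x} \<in> M")
    case True
    then show ?thesis using less.prems unfolding circuits_def by blast
  next
    case False
    then obtain x where x: "x \<in> X" "X - {x} \<notin> M" by blast
    have "card (X - {x}) < card X" using card_Diff1_less[of X x] x less.prems by blast
    then obtain C where "C \<in> circuits M" "C \<subseteq> X - {x}"
      using less.hyps[of "X - {x}"] x less.prems by auto
    then show ?thesis by blast
  qed
qed

lemma circuit_notin: "C \<in> circuits M \<Longrightarrow> C \<notin> M"
  unfolding circuits_def by blast

lemma circuit_finite:
  assumes M: "finitary_matroid M" and C: "C \<in> circuits M"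
  shows "finite C"
proof -
  have "C \<notin> M" using C circuit_notin by blast
  then obtain F where F: "F \<subseteq> C" "finite F" "F \<notin> M" using fm_fin[OF M, of C] by blast
  have "F = C"
  proof (rule ccontr)
    assume "F \<noteq> C"
    then obtain x where "x \<in> C" "x \<notin> F" using F by blast
    then have "F \<subseteq> C - {x}" "C - {x} \<in> M" using F C unfolding circuits_def by auto
    then show False using fm_sub[OF M] F by blast
  qed
  then show ?thesis using F by simp
qed

lemma circuit_indep_sub: "finitary_matroid M \<Longrightarrow> C \<in> circuits M \<Longrightarrow> C \<subseteq> X \<Longrightarrow> X \<in> M \<Longrightarrow> False"
  using fm_sub circuit_notin by blast

definition frank :: "'a set set \<Rightarrow> 'a set \<Rightarrow> nat" where
  "frank M A = Max (card ` {J. J \<subseteq> A \<and> J \<in> M})"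

lemma frank_ge:
  assumes "finite A" "J \<subseteq> A" "J \<in> M" shows "card J \<le> frank M A"
  unfolding frank_def
  apply (rule Max_ge)
  using assms by auto

lemma frank_ex:
  assumes M: "finitary_matroid M" and A: "finite A"
  shows "\<exists>J. J \<subseteq> A \<and> J \<in> M \<and> card J = frank M A"
proof -
  have "finite (card ` {J. J \<subseteq> A \<and> J \<in> M})" using A by auto
  moreover have "card ` {J. J \<subseteq> A \<and> J \<in> M} \<noteq> {}" using fm_empty[OF M] by auto
  ultimately have "frank M A \<in> card ` {J. J \<subseteq> A \<and> J \<in> M}" unfolding frank_def
    using Max_in by blast
  then show ?thesis by auto
qed

lemma frank_mono:
  assumes M: "finitary_matroid M" and "finite B" "A \<subseteq> B"
  shows "frank M A \<le> frank M B"
proof -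
  have "finite A" using assms finite_subset by blast
  then obtain J where "J \<subseteq> A" "J \<in> M" "card J = frank M A" using frank_ex[OF M] by blast
  then show ?thesis using frank_ge[of B J M] assms by auto
qed

lemma frank_extend:
  assumes M: "finitary_matroid M" and A: "finite A" and X: "X \<subseteq> A" "X \<in> M"
  shows "\<exists>J. X \<subseteq> J \<and> J \<subseteq> A \<and> J \<in> M \<and> card J = frank M A"
proof -
  let ?F = "{J. X \<subseteq> J \<and> J \<subseteq> A \<and> J \<in> M}"
  have fin: "finite (card ` ?F)" using A by auto
  have ne: "card ` ?F \<noteq> {}" using X by auto
  then obtain J where J: "J \<in> ?F" "card J = Max (card ` ?F)" using Max_in[OF fin ne] by auto
  have Jmax: "\<And>J'. J' \<in> ?F \<Longrightarrow> card J' \<le> card J" using J fin by auto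
  have fJ: "finite J" using J A finite_subset by auto
  have "card J \<le> frank M A" using frank_ge[OF A, of J M] J by auto
  moreover have "\<not> card J < frank M A"
  proof
    assume lt: "card J < frank M A"
    obtain K where K: "K \<subseteq> A" "K \<in> M" "card K = frank M A" using frank_ex[OF M A] by blast
    have fK: "finite K" using K A finite_subset by auto
    obtain y where y: "y \<in> K - J" "insert y J \<in> M" using fm_aug[OF M, of J K] J K fJ fK lt by auto
    have "insert y J \<in> ?F" using y J K by auto
    then have "card (insert y J) \<le> card J" using Jmax by blast
    then show False using y fJ by simp
  qed
  ultimately show ?thesis using J by auto
qed

lemma frank_L:
  assumes M: "finitary_matroid M" and A: "finite A" and e: "e \<notin> A"
    and C: "C \<in> circuits M" "C \<subseteq> insert e A" "e \<in> C"
  shows "frank M (insert e A) \<le> frank M A"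
proof (rule ccontr)
  assume gt: "\<not> ?thesis"
  have "C - {e} \<in> M" using C unfolding circuits_def by auto
  then obtain J where J: "C - {e} \<subseteq> J" "J \<subseteq> A" "J \<in> M" "card J = frank M A"
    using frank_extend[OF M A, of "C - {e}"] C by auto
  obtain K where K: "K \<subseteq> insert e A" "K \<in> M" "card K = frank M (insert e A)"
    using frank_ex[OF M] A by blast
  have fJ: "finite J" using J A finite_subset by auto
  have fK: "finite K" using K A finite_subset by auto
  obtain y where y: "y \<in> K - J" "insert y J \<in> M" using fm_aug[OF M, of J K] J K fJ fK gt by auto
  show False
  proof (cases "y = e")
    case True
    then have "C \<subseteq> insert y J" using J by auto
    then show ?thesis using circuit_indep_sub[OF M C(1)] y by blast
  next
    case False
    then have "insert y J \<subseteq> A" using y K J by auto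
    then have "card (insert y J) \<le> frank M A" using frank_ge[OF A] y by blast
    then show ?thesis using y fJ J by simp
  qed
qed

lemma frank_Lx:
  assumes M: "finitary_matroid M" and A: "finite A" and x: "x \<notin> A"
    and nc: "\<And>C. C \<in> circuits M \<Longrightarrow> C \<subseteq> insert x A \<Longrightarrow> x \<notin> C"
  shows "frank M A + 1 \<le> frank M (insert x A)"
proof -
  obtain J where J: "J \<subseteq> A" "J \<in> M" "card J = frank M A" using frank_ex[OF M A] by blast
  have fJ: "finite J" using J A finite_subset by auto
  have "insert x J \<in> M"
  proof (rule ccontr)
    assume "insert x J \<notin> M"
    then obtain C where C: "C \<in> circuits M" "C \<subseteq> insert x J"
      using dep_contains_circuit[OF M] fJ by blast
    have "x \<in> C"
    proof (rule ccontr)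
      assume "x \<notin> C" then have "C \<subseteq> J" using C by auto
      then show False using circuit_indep_sub[OF M C(1)] J by blast
    qed
    moreover have "C \<subseteq> insert x A" using C J by auto
    ultimately show False using nc C by blast
  qed
  moreover have "x \<notin> J" using J x by auto
  then have "card (insert x J) = frank M A + 1" using J fJ by simp
  moreover note \<open>x \<notin> J\<close>
  moreover have "insert x J \<subseteq> insert x A" using J by auto
  ultimately show ?thesis using frank_ge[of "insert x A" "insert x J" M] A by auto
qed



lemma strong_elim:
  assumes M: "finitary_matroid M" and C: "C \<in> circuits M" and D: "D \<in> circuits M"
    and u: "u \<in> C" "u \<in> D" and x: "x \<in> C" "x \<notin> D"
  shows "\<exists>C3\<in>circuits M. x \<in> C3 \<and> C3 \<subseteq> (C \<union> D) - {u}"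
proof (rule ccontr)
  assume no: "\<not> ?thesis"
  define S where "S = C \<union> D"
  define A where "A = S - {u, x}"
  have fS: "finite S" unfolding S_def using circuit_finite[OF M] C D by auto
  have fA: "finite A" using fS unfolding A_def by auto
  have ux: "u \<noteq> x" using u x by auto
  have i: "frank M A + 1 \<le> frank M (insert x A)"
  proof -
    have xA: "x \<notin> A" unfolding A_def by simp
    have ins: "insert x A = (C \<union> D) - {u}" unfolding A_def S_def using ux x by auto
    have nc: "\<And>C'. C' \<in> circuits M \<Longrightarrow> C' \<subseteq> insert x A \<Longrightarrow> x \<notin> C'"
      using no unfolding ins by blast
    show ?thesis using frank_Lx[OF M fA xA nc] .
  qed
  have ii: "frank M (insert u A) \<le> frank M A"
    apply (rule frank_L[OF M fA _ D])
    using u x unfolding A_def S_def by auto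
  have iii: "frank M (insert x (insert u A)) \<le> frank M (insert u A)"
    apply (rule frank_L[OF M _ _ C])
    using u x ux fA unfolding A_def S_def by auto
  have iv: "frank M (insert x A) \<le> frank M (insert x (insert u A))"
    apply (rule frank_mono[OF M]) using fA by auto
  show False using i ii iii iv by linarith
qed



definition tcirc :: "('n::finite) lpoly set \<Rightarrow> 'n lpoly \<Rightarrow> bool" where
  "tcirc I g \<longleftrightarrow> g \<in> I \<and> g \<noteq> {} \<and> (\<forall>h\<in>I. h \<subseteq> g \<longrightarrow> h = {} \<or> h = g)"

lemma trop_semi: "tropical_ideal I \<Longrightarrow> semiring_ideal I"
  by (simp add: tropical_ideal_def)

lemma trop_fin: "tropical_ideal I \<Longrightarrow> f \<in> I \<Longrightarrow> finite f"
  using trop_semi[of I] by (simp add: semiring_ideal_def bpoly_def)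

lemma trop_union: "tropical_ideal I \<Longrightarrow> f \<in> I \<Longrightarrow> g \<in> I \<Longrightarrow> f \<union> g \<in> I"
  using trop_semi[of I] by (simp add: semiring_ideal_def poly_add_def)

lemma trop_mult: "tropical_ideal I \<Longrightarrow> f \<in> I \<Longrightarrow> finite g \<Longrightarrow> poly_mult g f \<in> I"
  using trop_semi[of I] by (simp add: semiring_ideal_def bpoly_def)

lemma trop_nonempty: "tropical_ideal I \<Longrightarrow> \<exists>f. f \<in> I"
  using trop_semi[of I] by (simp add: semiring_ideal_def ex_in_conv)

lemma trop_empty: "tropical_ideal I \<Longrightarrow> {} \<in> I"
proof -
  assume T: "tropical_ideal I"
  then obtain f where "f \<in> I" using trop_nonempty by blast
  then have "poly_mult {} f \<in> I" using trop_mult[OF T] by blast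
  moreover have "poly_mult {} f = {}" unfolding poly_mult_def by auto
  ultimately show ?thesis by simp
qed

lemma trop_elim0: "tropical_ideal I \<Longrightarrow> \<forall>f\<in>I. \<forall>g\<in>I. \<forall>u \<in> f \<inter> g. \<exists>h\<in>I.
        (f - g) \<union> (g - f) \<subseteq> h \<and> h \<subseteq> (f \<union> g) - {u}"
  by (simp add: tropical_ideal_def supp_def)

lemma trop_elim: "tropical_ideal I \<Longrightarrow> f \<in> I \<Longrightarrow> g \<in> I \<Longrightarrow> u \<in> f \<Longrightarrow> u \<in> g \<Longrightarrow>
   \<exists>h\<in>I. (f - g) \<union> (g - f) \<subseteq> h \<and> h \<subseteq> (f \<union> g) - {u}"
  using trop_elim0[of I] by (meson IntI)

lemma poly_mult_single: "poly_mult {u} f = translate u f"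
  unfolding poly_mult_def translate_def by auto

lemma trop_translate: "tropical_ideal I \<Longrightarrow> f \<in> I \<Longrightarrow> translate u f \<in> I"
  using trop_mult[of I f "{u}"] poly_mult_single[of u f] by simp


lemma trop_circ_exists:
  assumes T: "tropical_ideal I"
  shows "f \<in> I \<Longrightarrow> u \<in> f \<Longrightarrow> \<exists>g. tcirc I g \<and> u \<in> g \<and> g \<subseteq> f"
proof (induction "card f" arbitrary: f rule: less_induct)
  case less
  have ff: "finite f" using trop_fin[OF T less.prems(1)] .
  show ?case
  proof (cases "tcirc I f")
    case True then show ?thesis using less.prems by blast
  next
    case False
    then obtain h where h: "h \<in> I" "h \<subseteq> f" "h \<noteq> {}" "h \<noteq> f"
      using less.prems unfolding tcirc_def by blast
    have hl: "card h < card f" using h ff by (simp add: psubset_card_mono psubset_eq)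
    show ?thesis
    proof (cases "u \<in> h")
      case True
      then obtain g where "tcirc I g" "u \<in> g" "g \<subseteq> h" using less.hyps[OF hl h(1)] by blast
      then show ?thesis using h by blast
    next
      case False
      obtain w where w: "w \<in> h" using h by blast
      obtain k where k: "k \<in> I" "(f - h) \<union> (h - f) \<subseteq> k" "k \<subseteq> (f \<union> h) - {w}"
        using trop_elim[OF T less.prems(1) h(1), of w] w h by blast
      have uk: "u \<in> k" using k False less.prems by blast
      have kf: "k \<subseteq> f" using k h by blast
      have "k \<noteq> f" using k w h by blast
      then have kl: "card k < card f" using kf ff by (simp add: psubset_card_mono psubset_eq)
      obtain g where "tcirc I g" "u \<in> g" "g \<subseteq> k" using less.hyps[OF kl k(1) uk] by blast
      then show ?thesis using kf by blast
    qed
  qed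
qed

lemma tcirc_iff: "tcirc I C \<longleftrightarrow> C \<in> circuits (underlying_matroid I)"
proof
  assume t: "tcirc I C"
  show "C \<in> circuits (underlying_matroid I)"
  proof -
    have a: "C \<notin> underlying_matroid I" using t by (auto simp: tcirc_def underlying_matroid_def supp_def)
    have b: "\<forall>x\<in>C. C - {x} \<in> underlying_matroid I"
    proof
      fix x assume x: "x \<in> C"
      have "\<forall>f\<in>I. f \<noteq> {} \<longrightarrow> \<not> f \<subseteq> C - {x}"
      proof (intro ballI impI notI)
        fix f assume "f \<in> I" "f \<noteq> {}" "f \<subseteq> C - {x}"
        then have "f = C" using t unfolding tcirc_def by blast
        then show False using x \<open>f \<subseteq> C - {x}\<close> by blast
      qed
      then show "C - {x} \<in> underlying_matroid I" by (simp add: underlying_matroid_def supp_def)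
    qed
    show ?thesis using a b by (simp add: circuits_def)
  qed
next
  assume c: "C \<in> circuits (underlying_matroid I)"
  then have c1: "C \<notin> underlying_matroid I" and c2: "\<And>x. x \<in> C \<Longrightarrow> C - {x} \<in> underlying_matroid I"
    unfolding circuits_def by auto
  obtain f where f: "f \<in> I" "f \<noteq> {}" "f \<subseteq> C" using c1 unfolding underlying_matroid_def supp_def by blast
  have key: "\<And>h. h \<in> I \<Longrightarrow> h \<noteq> {} \<Longrightarrow> h \<subseteq> C \<Longrightarrow> h = C"
  proof (rule ccontr)
    fix h assume h: "h \<in> I" "h \<noteq> {}" "h \<subseteq> C" "h \<noteq> C"
    then obtain x where "x \<in> C" "x \<notin> h" by blast
    then have "h \<subseteq> C - {x}" "C - {x} \<in> underlying_matroid I" using h c2 by auto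
    then show False using h unfolding underlying_matroid_def supp_def by blast
  qed
  have "C = f" using key[OF f] by simp
  then show "tcirc I C" unfolding tcirc_def using f key by blast
qed

definition ideal_of :: "(int ^ ('n::finite)) set set \<Rightarrow> 'n lpoly set" where
  "ideal_of M = {f. finite f \<and> (\<forall>x\<in>f. \<exists>C\<in>circuits M. x \<in> C \<and> C \<subseteq> f)}"

lemma trop_Union: assumes T: "tropical_ideal I" shows "finite F \<Longrightarrow> F \<subseteq> I \<Longrightarrow> \<Union>F \<in> I"
proof (induction F rule: finite_induct)
  case empty then show ?case using trop_empty[OF T] by simp
next
  case (insert x F) then show ?case using trop_union[OF T] by simp
qed

lemma trop_ideal_of:
  assumes T: "tropical_ideal I"
  shows "I = ideal_of (underlying_matroid I)"
proof
  show "I \<subseteq> ideal_of (underlying_matroid I)"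
  proof
    fix f assume f: "f \<in> I"
    have "\<forall>x\<in>f. \<exists>C\<in>circuits (underlying_matroid I). x \<in> C \<and> C \<subseteq> f"
    proof
      fix x assume "x \<in> f"
      then obtain g where "tcirc I g" "x \<in> g" "g \<subseteq> f" using trop_circ_exists[OF T f] by blast
      then show "\<exists>C\<in>circuits (underlying_matroid I). x \<in> C \<and> C \<subseteq> f"
        using tcirc_iff[of I g] by blast
    qed
    then show "f \<in> ideal_of (underlying_matroid I)" unfolding ideal_of_def using trop_fin[OF T f] by blast
  qed
next
  show "ideal_of (underlying_matroid I) \<subseteq> I"
  proof
    fix f assume "f \<in> ideal_of (underlying_matroid I)"
    then have ff: "finite f" and cx0: "\<forall>x\<in>f. \<exists>C\<in>circuits (underlying_matroid I). x \<in> C \<and> C \<subseteq> f"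
      unfolding ideal_of_def by auto
    have cx: "\<forall>x\<in>f. \<exists>C. tcirc I C \<and> x \<in> C \<and> C \<subseteq> f"
    proof
      fix x assume "x \<in> f"
      then obtain C where "C\<in>circuits (underlying_matroid I)" "x\<in>C" "C\<subseteq>f" using cx0 by blast
      then show "\<exists>C. tcirc I C \<and> x \<in> C \<and> C \<subseteq> f" using tcirc_iff[of I C] by blast
    qed
    obtain c where c: "\<forall>x\<in>f. tcirc I (c x) \<and> x \<in> c x \<and> c x \<subseteq> f"
      using bchoice[OF cx] by blast
    have "f = \<Union>(c ` f)" using c by blast
    moreover have "\<Union>(c ` f) \<in> I"
      apply (rule trop_Union[OF T]) using ff c unfolding tcirc_def by auto
    ultimately show "f \<in> I" by simp
  qed
qed



lemma um_sub: "X \<in> underlying_matroid I \<Longrightarrow> Y \<subseteq> X \<Longrightarrow> Y \<in> underlying_matroid I"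
  unfolding underlying_matroid_def by blast

lemma tcirc_not_sub: "tcirc I g \<Longrightarrow> g \<subseteq> X \<Longrightarrow> X \<in> underlying_matroid I \<Longrightarrow> False"
  unfolding tcirc_def underlying_matroid_def supp_def by blast

lemma trop_dep:
  assumes T: "tropical_ideal I" and X: "X \<notin> underlying_matroid I"
  shows "\<exists>g. tcirc I g \<and> g \<subseteq> X"
proof -
  obtain f where f: "f \<in> I" "f \<noteq> {}" "f \<subseteq> X" using X unfolding underlying_matroid_def supp_def by blast
  then obtain u where "u \<in> f" by blast
  then obtain g where "tcirc I g" "g \<subseteq> f" using trop_circ_exists[OF T f(1)] by blast
  then show ?thesis using f by blast
qed

lemma tcirc_elim:
  assumes T: "tropical_ideal I" and C1: "tcirc I C1" and C2: "tcirc I C2" and ne: "C1 \<noteq> C2"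
    and e: "e \<in> C1" "e \<in> C2"
  shows "\<exists>C3. tcirc I C3 \<and> C3 \<subseteq> (C1 \<union> C2) - {e}"
proof -
  have i: "C1 \<in> I" "C2 \<in> I" using C1 C2 unfolding tcirc_def by auto
  obtain h where h: "h \<in> I" "(C1 - C2) \<union> (C2 - C1) \<subseteq> h" "h \<subseteq> (C1 \<union> C2) - {e}"
    using trop_elim[OF T i e] by blast
  have "(C1 - C2) \<union> (C2 - C1) \<noteq> {}" using ne by blast
  then obtain w where "w \<in> h" using h by blast
  then obtain g where "tcirc I g" "g \<subseteq> h" using trop_circ_exists[OF T h(1)] by blast
  then show ?thesis using h by blast
qed

lemma tcirc_unique:
  assumes T: "tropical_ideal I" and X: "X \<in> underlying_matroid I"
    and C1: "tcirc I C1" "C1 \<subseteq> insert y X" "y \<in> C1"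
    and C2: "tcirc I C2" "C2 \<subseteq> insert y X" "y \<in> C2"
  shows "C1 = C2"
proof (rule ccontr)
  assume "C1 \<noteq> C2"
  then obtain C3 where "tcirc I C3" "C3 \<subseteq> (C1 \<union> C2) - {y}"
    using tcirc_elim[OF T C1(1) C2(1) _ C1(3) C2(3)] by blast
  moreover have "(C1 \<union> C2) - {y} \<subseteq> X" using C1 C2 by blast
  ultimately show False using tcirc_not_sub[OF \<open>tcirc I C3\<close> _ X] by blast
qed


lemma trop_aug:
  assumes T: "tropical_ideal I" and Y: "Y \<in> underlying_matroid I" "finite Y"
  shows "X \<in> underlying_matroid I \<Longrightarrow> finite X \<Longrightarrow> card X < card Y \<Longrightarrow> card (X - Y) = n
     \<Longrightarrow> \<exists>y\<in>Y-X. insert y X \<in> underlying_matroid I"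
proof (induction n arbitrary: X)
  case 0
  have "finite (X - Y)" using 0(2) by simp
  then have "X - Y = {}" using 0(4) by simp
  then have XY: "X \<subseteq> Y" by blast
  have "\<not> Y \<subseteq> X"
  proof
    assume "Y \<subseteq> X" then have "card Y \<le> card X" using card_mono[OF 0(2)] by blast
    then show False using 0(3) by simp
  qed
  then obtain y where y: "y \<in> Y - X" using XY by blast
  then have "insert y X \<subseteq> Y" using XY by blast
  then show ?case using um_sub[OF Y(1)] y by blast
next
  case (Suc n)
  let ?U = "underlying_matroid I"
  show ?case
  proof (rule ccontr)
    assume nag: "\<not> ?thesis"
    have "\<not> Y \<subseteq> X"
    proof
      assume "Y \<subseteq> X" then have "card Y \<le> card X" using card_mono[OF Suc.prems(2)] by blast
      then show False using Suc.prems(3) by simp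
    qed
    then obtain y0 where y0: "y0 \<in> Y" "y0 \<notin> X" by blast
    then have "insert y0 X \<notin> ?U" using nag by blast
    then obtain C0 where C0: "tcirc I C0" "C0 \<subseteq> insert y0 X" using trop_dep[OF T] by blast
    have y0C0: "y0 \<in> C0"
    proof (rule ccontr)
      assume "y0 \<notin> C0" then have "C0 \<subseteq> X" using C0 by blast
      then show False using tcirc_not_sub[OF C0(1) _ Suc.prems(1)] by blast
    qed
    have "\<not> C0 \<subseteq> Y" using tcirc_not_sub[OF C0(1) _ Y(1)] by blast
    then obtain e where e: "e \<in> C0" "e \<notin> Y" by blast
    have eX: "e \<in> X" using e C0 y0 by blast
    have ey0: "e \<noteq> y0" using e y0 by blast
    define X1 where "X1 = insert y0 (X - {e})"
    have X1U: "X1 \<in> ?U"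
    proof (rule ccontr)
      assume "X1 \<notin> ?U"
      then obtain C' where C': "tcirc I C'" "C' \<subseteq> X1" using trop_dep[OF T] by blast
      have "y0 \<in> C'"
      proof (rule ccontr)
        assume "y0 \<notin> C'" then have "C' \<subseteq> X" using C' unfolding X1_def by blast
        then show False using tcirc_not_sub[OF C'(1) _ Suc.prems(1)] by blast
      qed
      moreover have "C' \<subseteq> insert y0 X" using C' unfolding X1_def by blast
      ultimately have "C' = C0" using tcirc_unique[OF T Suc.prems(1) C'(1) _ _ C0 y0C0] by blast
      then show False using e C' ey0 unfolding X1_def by blast
    qed
    have fX1: "finite X1" unfolding X1_def using Suc.prems by simp
    have cX1: "card X1 = card X"
    proof -
      have "card X1 = Suc (card (X - {e}))" unfolding X1_def using Suc.prems(2) y0(2) by simp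
      also have "card (X - {e}) = card X - 1" using eX by (simp add: card_Diff_singleton)
      also have "card X > 0" using eX Suc.prems(2) card_gt_0_iff by blast
      then have "Suc (card X - 1) = card X" by simp
      finally show ?thesis .
    qed
    have "X1 - Y = (X - Y) - {e}" unfolding X1_def using y0 by blast
    moreover have "e \<in> X - Y" using eX e by blast
    ultimately have "card (X1 - Y) = n" using Suc.prems(4) by (simp add: card_Diff_singleton)
    moreover have "card X1 < card Y" using cX1 Suc.prems(3) by simp
    ultimately obtain z where z: "z \<in> Y - X1" "insert z X1 \<in> ?U"
      using Suc.IH[OF X1U fX1] by blast
    have zX: "z \<notin> X" using z e unfolding X1_def by blast
    have zy0: "z \<noteq> y0" using z unfolding X1_def by blast
    have "insert z X \<notin> ?U" using nag z zX by blast
    then obtain Cz where Cz: "tcirc I Cz" "Cz \<subseteq> insert z X" using trop_dep[OF T] by blast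
    have eCz: "e \<in> Cz"
    proof (rule ccontr)
      assume "e \<notin> Cz" then have "Cz \<subseteq> insert z X1" using Cz unfolding X1_def by blast
      then show False using tcirc_not_sub[OF Cz(1) _ z(2)] by blast
    qed
    have "y0 \<notin> Cz" using Cz y0 zy0 by blast
    then have "C0 \<noteq> Cz" using y0C0 by blast
    then obtain C3 where C3: "tcirc I C3" "C3 \<subseteq> (C0 \<union> Cz) - {e}"
      using tcirc_elim[OF T C0(1) Cz(1) _ e(1) eCz] by blast
    have "(C0 \<union> Cz) - {e} \<subseteq> insert z X1" using C0 Cz unfolding X1_def by blast
    then show False using tcirc_not_sub[OF C3(1) _ z(2)] C3(2) by blast
  qed
qed


lemma trop_fm:
  assumes T: "tropical_ideal I"
  shows "finitary_matroid (underlying_matroid I)"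
  unfolding finitary_matroid_def
proof (intro conjI ballI allI impI)
  show "underlying_matroid I \<noteq> {}" unfolding underlying_matroid_def supp_def by blast
next
  fix X Y assume "X \<in> underlying_matroid I" "Y \<subseteq> X"
  then show "Y \<in> underlying_matroid I" using um_sub by blast
next
  fix X Y assume "X \<in> underlying_matroid I" "Y \<in> underlying_matroid I"
    "finite X \<and> finite Y \<and> card X < card Y"
  then show "\<exists>y\<in>Y - X. insert y X \<in> underlying_matroid I"
    using trop_aug[OF T, of Y X "card (X - Y)"] by blast
next
  fix X assume H: "\<forall>F. F \<subseteq> X \<and> finite F \<longrightarrow> F \<in> underlying_matroid I"
  show "X \<in> underlying_matroid I"
  proof (rule ccontr)
    assume "X \<notin> underlying_matroid I"
    then obtain f where f: "f \<in> I" "f \<noteq> {}" "f \<subseteq> X" unfolding underlying_matroid_def supp_def by blast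
    then have "f \<in> underlying_matroid I" using H trop_fin[OF T] by blast
    then show False using f unfolding underlying_matroid_def supp_def by blast
  qed
qed



lemma translate_add: "translate u (translate v S) = translate (u + v) S"
  unfolding translate_def by (auto simp: image_image add.assoc)

lemma translate_0: "translate 0 S = S"
  unfolding translate_def by simp

lemma translate_neg: "translate (-u) (translate u S) = S"
  by (simp add: translate_add translate_0)

lemma translate_neg2: "translate u (translate (-u) S) = S"
  by (simp add: translate_add translate_0)

lemma translate_inj: "translate u A = translate u B \<Longrightarrow> A = B"
  by (metis translate_neg)

lemma inj_plus: "inj ((+) (u::'a::ab_group_add))"
  by (simp add: inj_on_def)

lemma card_translate: "card (translate u S) = card S"
  unfolding translate_def by (simp add: card_image inj_on_def)

lemma finite_translate: "finite (translate u S) \<longleftrightarrow> finite S"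
  unfolding translate_def by (simp add: finite_image_iff inj_on_def)

lemma translate_mono: "A \<subseteq> B \<Longrightarrow> translate u A \<subseteq> translate u B"
  unfolding translate_def by blast

lemma translate_subset_iff: "translate u A \<subseteq> translate u B \<longleftrightarrow> A \<subseteq> B"
  by (metis translate_mono translate_neg)

lemma translate_mem: "(u + x \<in> translate u S) \<longleftrightarrow> x \<in> S"
  unfolding translate_def by auto

lemma translate_diff_single: "translate u (C - {c}) = translate u C - {u + c}"
  unfolding translate_def by auto

lemma translate_insert: "translate u (insert c C) = insert (u + c) (translate u C)"
  unfolding translate_def by auto


lemma ti_intro: "(\<And>u S. S \<in> C \<Longrightarrow> translate u S \<in> C) \<Longrightarrow> translation_invariant C"
  unfolding translation_invariant_def
proof (intro allI equalityI subsetI)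
  fix u X assume H: "\<And>u S. S \<in> C \<Longrightarrow> translate u S \<in> C"
  { assume "X \<in> translate u ` C" then show "X \<in> C" using H by blast }
  { assume X: "X \<in> C"
    have "X = translate u (translate (-u) X)" by (simp add: translate_neg2)
    then show "X \<in> translate u ` C" using H[OF X] by blast }
qed

lemma ti_mem: "translation_invariant C \<Longrightarrow> translate u S \<in> C \<longleftrightarrow> S \<in> C"
proof
  assume TI: "translation_invariant C"
  then have e: "translate u ` C = C" unfolding translation_invariant_def by blast
  { assume "translate u S \<in> C"
    then have "translate u S \<in> translate u ` C" using e by simp
    then obtain T where "T \<in> C" "translate u S = translate u T" by blast
    then show "S \<in> C" using translate_inj by blast }
  { assume "S \<in> C"
    then have "translate u S \<in> translate u ` C" by blast
    then show "translate u S \<in> C" using e by simp }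
qed

lemma trop_ti:
  assumes T: "tropical_ideal I"
  shows "translation_invariant (underlying_matroid I)"
proof (rule ti_intro)
  fix u S assume S: "S \<in> underlying_matroid I"
  show "translate u S \<in> underlying_matroid I"
    unfolding underlying_matroid_def supp_def
  proof (intro CollectI ballI impI notI)
    fix f assume f: "f \<in> I" "f \<noteq> {}" "f \<subseteq> translate u S"
    have "translate (-u) f \<in> I" using trop_translate[OF T f(1)] .
    moreover have "translate (-u) f \<noteq> {}" using f unfolding translate_def by auto
    moreover have "translate (-u) f \<subseteq> S" using translate_mono[OF f(3), of "-u"] translate_neg[of u S] by simp
    ultimately show False using S unfolding underlying_matroid_def supp_def by blast
  qed
qed

lemma circuit_translate:
  assumes M: "translation_invariant M" and C: "C \<in> circuits M"
  shows "translate u C \<in> circuits M"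
proof -
  have a: "translate u C \<notin> M" using C ti_mem[OF M] unfolding circuits_def by blast
  have b: "\<forall>x\<in>translate u C. translate u C - {x} \<in> M"
  proof
    fix x assume "x \<in> translate u C"
    then obtain c where c: "c \<in> C" "x = u + c" unfolding translate_def by blast
    then have "C - {c} \<in> M" using C unfolding circuits_def by blast
    moreover have "translate u C - {x} = translate u (C - {c})" using c by (simp add: translate_diff_single)
    ultimately show "translate u C - {x} \<in> M" using ti_mem[OF M] by simp
  qed
  show ?thesis using a b unfolding circuits_def by blast
qed


lemma ideal_of_elim_half:
  assumes FM: "finitary_matroid M" and f: "f \<in> ideal_of M" and g: "g \<in> ideal_of M"
    and u: "u \<in> f" "u \<in> g" and x: "x \<in> f" "x \<notin> g"
  shows "\<exists>C\<in>circuits M. x \<in> C \<and> C \<subseteq> (f \<union> g) - {u}"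
proof -
  obtain C where C: "C \<in> circuits M" "x \<in> C" "C \<subseteq> f" using f x unfolding ideal_of_def by blast
  show ?thesis
  proof (cases "u \<in> C")
    case False then show ?thesis using C by blast
  next
    case True
    obtain D where D: "D \<in> circuits M" "u \<in> D" "D \<subseteq> g" using g u unfolding ideal_of_def by blast
    have "x \<notin> D" using D x by blast
    then obtain C3 where "C3 \<in> circuits M" "x \<in> C3" "C3 \<subseteq> (C \<union> D) - {u}"
      using strong_elim[OF FM C(1) D(1) True D(2) C(2)] by blast
    then show ?thesis using C D by blast
  qed
qed

lemma ideal_of_trop:
  fixes M :: "(int ^ ('n::finite)) set set"
  assumes FM: "finitary_matroid M" and TI: "translation_invariant M"
  shows "tropical_ideal (ideal_of M)"
  unfolding tropical_ideal_def semiring_ideal_def supp_def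
proof (intro conjI ballI allI impI)
  show "ideal_of M \<noteq> {}" unfolding ideal_of_def by blast
next
  fix f assume "f \<in> ideal_of M" then show "bpoly f" unfolding ideal_of_def bpoly_def by blast
next
  fix f g assume f: "f \<in> ideal_of M" and g: "g \<in> ideal_of M"
  have "\<forall>x\<in>f \<union> g. \<exists>C\<in>circuits M. x \<in> C \<and> C \<subseteq> f \<union> g"
  proof
    fix x assume "x \<in> f \<union> g"
    then show "\<exists>C\<in>circuits M. x \<in> C \<and> C \<subseteq> f \<union> g"
    proof
      assume "x \<in> f" then obtain C where "C\<in>circuits M" "x \<in> C" "C \<subseteq> f" using f unfolding ideal_of_def by blast
      then show ?thesis by blast
    next
      assume "x \<in> g" then obtain C where "C\<in>circuits M" "x \<in> C" "C \<subseteq> g" using g unfolding ideal_of_def by blast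
      then show ?thesis by blast
    qed
  qed
  moreover have "finite (f \<union> g)" using f g unfolding ideal_of_def by simp
  ultimately show "poly_add f g \<in> ideal_of M" unfolding ideal_of_def poly_add_def by blast
next
  fix f g :: "'n lpoly" assume f: "f \<in> ideal_of M" and g: "bpoly g"
  have fin: "finite (poly_mult g f)"
  proof -
    have "poly_mult g f = (\<lambda>(a, b). a + b) ` (g \<times> f)" unfolding poly_mult_def by auto
    then show ?thesis using f g unfolding ideal_of_def bpoly_def by simp
  qed
  have "\<forall>w\<in>poly_mult g f. \<exists>C\<in>circuits M. w \<in> C \<and> C \<subseteq> poly_mult g f"
  proof
    fix w assume "w \<in> poly_mult g f"
    then obtain a v where av: "a \<in> g" "v \<in> f" "w = a + v" unfolding poly_mult_def by blast
    then obtain C where C: "C \<in> circuits M" "v \<in> C" "C \<subseteq> f" using f unfolding ideal_of_def by blast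
    have "translate a C \<in> circuits M" using circuit_translate[OF TI C(1)] .
    moreover have "w \<in> translate a C" using av C unfolding translate_def by blast
    moreover have "translate a C \<subseteq> poly_mult g f" using av C unfolding translate_def poly_mult_def by blast
    ultimately show "\<exists>C\<in>circuits M. w \<in> C \<and> C \<subseteq> poly_mult g f" by blast
  qed
  then show "poly_mult g f \<in> ideal_of M" using fin unfolding ideal_of_def by blast
next
  fix f g u assume f: "f \<in> ideal_of M" and g: "g \<in> ideal_of M" and u: "u \<in> f \<inter> g"
  define h where "h = {x \<in> (f \<union> g) - {u}. \<exists>C\<in>circuits M. x \<in> C \<and> C \<subseteq> (f \<union> g) - {u}}"
  have fh: "finite h" unfolding h_def using f g unfolding ideal_of_def by auto
  have "h \<in> ideal_of M" unfolding ideal_of_def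
  proof (intro CollectI conjI fh ballI)
    fix x assume "x \<in> h"
    then obtain C where C: "C\<in>circuits M" "x \<in> C" "C \<subseteq> (f \<union> g) - {u}" unfolding h_def by blast
    then have "C \<subseteq> h" unfolding h_def by blast
    then show "\<exists>C\<in>circuits M. x \<in> C \<and> C \<subseteq> h" using C by blast
  qed
  moreover have "(f - g) \<union> (g - f) \<subseteq> h"
  proof
    fix x assume x: "x \<in> (f - g) \<union> (g - f)"
    then have "\<exists>C\<in>circuits M. x \<in> C \<and> C \<subseteq> (f \<union> g) - {u}"
    proof
      assume "x \<in> f - g" then show ?thesis using ideal_of_elim_half[OF FM f g, of u x] u by blast
    next
      assume "x \<in> g - f" then show ?thesis using ideal_of_elim_half[OF FM g f, of u x] u
        by (simp add: Un_commute)
    qed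
    moreover have "x \<noteq> u" using x u by blast
    ultimately show "x \<in> h" unfolding h_def using x by blast
  qed
  moreover have "h \<subseteq> (f \<union> g) - {u}" unfolding h_def by blast
  ultimately show "\<exists>h\<in>ideal_of M. (f - g) \<union> (g - f) \<subseteq> h \<and> h \<subseteq> f \<union> g - {u}" by blast
qed


lemma um_ideal_of:
  assumes FM: "finitary_matroid M"
  shows "underlying_matroid (ideal_of M) = M"
proof (intro equalityI subsetI)
  fix S assume S: "S \<in> underlying_matroid (ideal_of M)"
  show "S \<in> M"
  proof (rule ccontr)
    assume "S \<notin> M"
    then obtain F where F: "F \<subseteq> S" "finite F" "F \<notin> M" using fm_fin[OF FM, of S] by blast
    then obtain C where C: "C \<in> circuits M" "C \<subseteq> F" using dep_contains_circuit[OF FM] by blast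
    have fC: "finite C" using circuit_finite[OF FM C(1)] .
    have "C \<noteq> {}" using C fm_empty[OF FM] circuit_notin by blast
    moreover have "C \<in> ideal_of M" unfolding ideal_of_def using C fC by blast
    ultimately show False using S C F unfolding underlying_matroid_def supp_def by blast
  qed
next
  fix S assume S: "S \<in> M"
  show "S \<in> underlying_matroid (ideal_of M)"
    unfolding underlying_matroid_def supp_def
  proof (intro CollectI ballI impI notI)
    fix f assume f: "f \<in> ideal_of M" "f \<noteq> {}" "f \<subseteq> S"
    then obtain x where "x \<in> f" by blast
    then obtain C where "C \<in> circuits M" "C \<subseteq> f" using f unfolding ideal_of_def by blast
    then show False using circuit_indep_sub[OF FM] f S by blast
  qed
qed

theorem part1:
  "bij_betw (underlying_matroid :: 'n::finite lpoly set \<Rightarrow> _)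
            {I. tropical_ideal I}
            {M. finitary_matroid M \<and> translation_invariant M}"
  unfolding bij_betw_def
proof
  show "inj_on (underlying_matroid :: 'n::finite lpoly set \<Rightarrow> _) {I. tropical_ideal I}"
  proof (rule inj_onI)
    fix I J :: "'n lpoly set" assume "I \<in> {I. tropical_ideal I}" "J \<in> {I. tropical_ideal I}"
      "underlying_matroid I = underlying_matroid J"
    then have "tropical_ideal I" "tropical_ideal J" "underlying_matroid I = underlying_matroid J" by auto
    then show "I = J" using trop_ideal_of[of I] trop_ideal_of[of J] by simp
  qed
next
  show "underlying_matroid ` {I. tropical_ideal I} = {M :: (int^'n) set set. finitary_matroid M \<and> translation_invariant M}"
  proof (intro equalityI subsetI)
    fix M assume "M \<in> underlying_matroid ` {I :: 'n lpoly set. tropical_ideal I}"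
    then show "M \<in> {M. finitary_matroid M \<and> translation_invariant M}" using trop_fm trop_ti by blast
  next
    fix M :: "(int^'n) set set" assume "M \<in> {M. finitary_matroid M \<and> translation_invariant M}"
    then have "finitary_matroid M" "translation_invariant M" by auto
    show "M \<in> underlying_matroid ` {I. tropical_ideal I}"
    proof (rule rev_image_eqI)
      show "ideal_of M \<in> {I. tropical_ideal I}" using ideal_of_trop \<open>finitary_matroid M\<close> \<open>translation_invariant M\<close> by blast
      show "M = underlying_matroid (ideal_of M)" using um_ideal_of[OF \<open>finitary_matroid M\<close>] by (rule sym)
    qed
  qed
qed



definition MP :: "nat \<Rightarrow> 'a set set \<Rightarrow> 'a set set" where
  "MP d P = {X. finite X \<and> (card X \<le> d \<or> (card X = d + 1 \<and> \<not> (\<exists>B\<in>P. X \<subseteq> B)))}"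

lemma dp_two: "d_partition d E P \<Longrightarrow> \<exists>A\<in>P. \<exists>B\<in>P. A \<noteq> B"
  by (simp add: d_partition_def)
lemma dp_size: "d_partition d E P \<Longrightarrow> B \<in> P \<Longrightarrow> infinite B \<or> card B \<ge> d"
  by (simp add: d_partition_def)
lemma dp_ex1: "d_partition d UNIV P \<Longrightarrow> finite S \<Longrightarrow> card S = d \<Longrightarrow> \<exists>!B. B \<in> P \<and> S \<subseteq> B"
  by (simp add: d_partition_def)
lemma dp_ex1': assumes "d_partition d UNIV P" "finite S" "card S = d"
  obtains B0 where "B0 \<in> P" "S \<subseteq> B0" "\<And>y. y \<in> P \<Longrightarrow> S \<subseteq> y \<Longrightarrow> y = B0"
proof -
  have "\<exists>!B. B \<in> P \<and> S \<subseteq> B" using dp_ex1[OF assms] .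
  then obtain B0 where "B0 \<in> P \<and> S \<subseteq> B0" "\<forall>y. y \<in> P \<and> S \<subseteq> y \<longrightarrow> y = B0"
    unfolding Ex1_def by blast
  then show ?thesis using that by blast
qed
lemma dp_ex: assumes "d_partition d UNIV P" "finite S" "card S = d" shows "\<exists>B\<in>P. S \<subseteq> B"
  using dp_ex1'[OF assms] by metis
lemma dp_uniq: assumes "d_partition d UNIV P" "finite S" "card S = d" "B \<in> P" "S \<subseteq> B"
   "C \<in> P" "S \<subseteq> C" shows "B = C"
proof -
  obtain B0 where "\<And>y. y \<in> P \<Longrightarrow> S \<subseteq> y \<Longrightarrow> y = B0" using dp_ex1'[OF assms(1-3)] by metis
  then have "B = B0" "C = B0" using assms(4-7) by auto
  then show ?thesis by simp
qed

lemma dsub: assumes "d_partition d E P" "B \<in> P" shows "\<exists>S. S \<subseteq> B \<and> finite S \<and> card S = d"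
proof (cases "finite B")
  case True
  then have "card B \<ge> d" using dp_size[OF assms] by blast
  then obtain T where "T \<subseteq> B" "card T = d" "finite T" by (rule obtain_subset_with_card_n)
  then show ?thesis by blast
next
  case False then show ?thesis using infinite_arbitrarily_large[OF False, of d] by blast
qed

lemma MP_K:
  assumes P: "d_partition d UNIV P" and B: "B \<in> P" "S \<subseteq> B" and S: "finite S" "card S = d"
    and x: "x \<notin> B"
  shows "insert x S \<in> MP d P"
proof -
  have xS: "x \<notin> S" using x B by blast
  have c: "card (insert x S) = d + 1" using S xS by simp
  have "\<not> (\<exists>C\<in>P. insert x S \<subseteq> C)"
  proof
    assume "\<exists>C\<in>P. insert x S \<subseteq> C"
    then obtain C where C: "C \<in> P" "insert x S \<subseteq> C" by blast
    then have "C = B" using dp_uniq[OF P S B(1) B(2) C(1)] by blast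
    then show False using C x by blast
  qed
  then show ?thesis unfolding MP_def using S c by simp
qed

lemma MP_large:
  assumes P: "d_partition d UNIV P"
  shows "\<exists>X\<in>MP d P. card X = d + 1"
proof -
  obtain A B where AB: "A \<in> P" "B \<in> P" "A \<noteq> B" using dp_two[OF P] by blast
  obtain S where S: "S \<subseteq> B" "finite S" "card S = d" using dsub[OF P AB(2)] by blast
  have "B \<noteq> UNIV"
  proof
    assume BU: "B = UNIV"
    obtain S' where S': "S' \<subseteq> A" "finite S'" "card S' = d" using dsub[OF P AB(1)] by blast
    then have "A = B" using dp_uniq[OF P S'(2) S'(3) AB(1) S'(1) AB(2)] BU by blast
    then show False using AB by blast
  qed
  then obtain x where x: "x \<notin> B" by blast
  have "insert x S \<in> MP d P" using MP_K[OF P AB(2) S(1) S(2) S(3) x] .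
  moreover have "x \<notin> S" using x S by blast
  then have "card (insert x S) = d + 1" using S by simp
  ultimately show ?thesis by blast
qed

lemma MP_bound: "X \<in> MP d P \<Longrightarrow> finite X \<and> card X \<le> d + 1"
  unfolding MP_def by auto

lemma MP_fm:
  assumes P: "d_partition d UNIV P"
  shows "finitary_matroid (MP d P)"
  unfolding finitary_matroid_def
proof (intro conjI ballI allI impI)
  have "{} \<in> MP d P" unfolding MP_def by simp
  then show "MP d P \<noteq> {}" by blast
next
  fix X Y assume X: "X \<in> MP d P" and YX: "Y \<subseteq> X"
  have fX: "finite X" using X unfolding MP_def by simp
  have fY: "finite Y" using finite_subset[OF YX fX] .
  have cY: "card Y \<le> card X" using card_mono[OF fX YX] .
  show "Y \<in> MP d P"
  proof (cases "card Y \<le> d")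
    case True then show ?thesis unfolding MP_def using fY by simp
  next
    case False
    then have "card X = d + 1" "\<not> (\<exists>B\<in>P. X \<subseteq> B)" using X cY unfolding MP_def by auto
    moreover then have "card Y = d + 1" using False cY by simp
    ultimately have "Y = X" using card_subset_eq[OF fX YX] by simp
    then show ?thesis using X by simp
  qed
next
  fix X Y assume X: "X \<in> MP d P" and Y: "Y \<in> MP d P" and H: "finite X \<and> finite Y \<and> card X < card Y"
  have cX: "card X \<le> d" using X Y H unfolding MP_def by auto
  show "\<exists>y\<in>Y - X. insert y X \<in> MP d P"
  proof (cases "card X < d")
    case True
    have "\<not> Y \<subseteq> X" using H card_mono[of X Y] by auto
    then obtain y where y: "y \<in> Y - X" by blast
    then have "card (insert y X) \<le> d" using True H by simp
    then have "insert y X \<in> MP d P" unfolding MP_def using H by simp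
    then show ?thesis using y by blast
  next
    case False
    then have cXd: "card X = d" using cX by simp
    then have cY: "card Y = d + 1" "\<not> (\<exists>B\<in>P. Y \<subseteq> B)" using Y H unfolding MP_def by auto
    obtain B where B: "B \<in> P" "X \<subseteq> B" using dp_ex[OF P _ cXd] H by blast
    obtain y where y: "y \<in> Y" "y \<notin> B" using cY(2) B by blast
    have "insert y X \<in> MP d P" using MP_K[OF P B(1) B(2) _ cXd y(2)] H by blast
    moreover have "y \<notin> X" using y B by blast
    ultimately show ?thesis using y by blast
  qed
next
  fix X assume H: "\<forall>F. F \<subseteq> X \<and> finite F \<longrightarrow> F \<in> MP d P"
  show "X \<in> MP d P"
  proof (cases "finite X")
    case True then show ?thesis using H by blast
  next
    case False
    obtain F where F: "finite F" "card F = d + 2" "F \<subseteq> X" using infinite_arbitrarily_large[OF False] by blast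
    then have "F \<in> MP d P" using H by blast
    then show ?thesis using F MP_bound by fastforce
  qed
qed

lemma MP_ti:
  fixes P :: "(int ^ ('n::finite)) set set"
  assumes TI: "translation_invariant P"
  shows "translation_invariant (MP d P)"
proof (rule ti_intro)
  fix u X assume X: "X \<in> MP d P"
  have f: "finite (translate u X)" using X finite_translate unfolding MP_def by blast
  have c: "card (translate u X) = card X" by (rule card_translate)
  have "\<not> (\<exists>B\<in>P. translate u X \<subseteq> B)" if "card X = d + 1" "\<not> (\<exists>B\<in>P. X \<subseteq> B)"
  proof
    assume "\<exists>B\<in>P. translate u X \<subseteq> B"
    then obtain B where B: "B \<in> P" "translate u X \<subseteq> B" by blast
    then have "translate (-u) B \<in> P" using ti_mem[OF TI] by blast
    moreover have "X \<subseteq> translate (-u) B" using translate_mono[OF B(2), of "-u"] translate_neg[of u X] by simp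
    ultimately show False using that by blast
  qed
  then show "translate u X \<in> MP d P" using X f c unfolding MP_def by auto
qed

lemma MP_rank:
  assumes P: "d_partition d UNIV P"
  shows "has_rank (MP d P) (d + 1)"
  unfolding has_rank_def using MP_bound MP_large[OF P] by blast

lemma MP_circuits:
  assumes C: "C \<in> circuits (MP d P)"
  shows "finite C \<and> (card C = d + 1 \<or> card C = d + 1 + 1)"
proof -
  have nC: "C \<notin> MP d P" and sC: "\<And>x. x \<in> C \<Longrightarrow> C - {x} \<in> MP d P" using C unfolding circuits_def by auto
  have "C \<noteq> {}" using nC unfolding MP_def by auto
  then obtain x where x: "x \<in> C" by blast
  have "finite (C - {x})" "card (C - {x}) \<le> d + 1" using MP_bound[OF sC[OF x]] by auto
  then have fC: "finite C" and cC: "card C \<le> d + 2" using x by (auto simp: card_Diff_singleton)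
  have "\<not> card C \<le> d" using nC fC unfolding MP_def by auto
  then show ?thesis using fC cC by auto
qed



lemma mrank_fin:
  assumes E: "{} \<in> M" and Bd: "\<forall>X\<in>M. finite X \<and> card X \<le> r"
  shows "finite {card Y | Y. Y \<subseteq> X \<and> Y \<in> M}" "{card Y | Y. Y \<subseteq> X \<and> Y \<in> M} \<noteq> {}"
    "mrank M X = Max {card Y | Y. Y \<subseteq> X \<and> Y \<in> M}"
proof -
  have "{card Y | Y. Y \<subseteq> X \<and> Y \<in> M} \<subseteq> {..r}" using Bd by auto
  then show f: "finite {card Y | Y. Y \<subseteq> X \<and> Y \<in> M}" using finite_subset by blast
  have "card {} \<in> {card Y | Y. Y \<subseteq> X \<and> Y \<in> M}" using E by (auto intro!: exI[of _ "{}"])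
  then show ne: "{card Y | Y. Y \<subseteq> X \<and> Y \<in> M} \<noteq> {}" by blast
  show "mrank M X = Max {card Y | Y. Y \<subseteq> X \<and> Y \<in> M}" unfolding mrank_def
    using cSup_eq_Max[OF f ne] .
qed

lemma mrank_ge:
  assumes E: "{} \<in> M" and Bd: "\<forall>X\<in>M. finite X \<and> card X \<le> r"
    and Y: "Y \<subseteq> X" "Y \<in> M"
  shows "card Y \<le> mrank M X"
proof -
  note m = mrank_fin[OF E Bd, of X]
  have "card Y \<in> {card Y | Y. Y \<subseteq> X \<and> Y \<in> M}" using Y by blast
  then show ?thesis using Max_ge[OF m(1)] m(3) by simp
qed

lemma mrank_ex:
  assumes E: "{} \<in> M" and Bd: "\<forall>X\<in>M. finite X \<and> card X \<le> r"
  shows "\<exists>Y. Y \<subseteq> X \<and> Y \<in> M \<and> card Y = mrank M X"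
proof -
  note m = mrank_fin[OF E Bd, of X]
  have "Max {card Y | Y. Y \<subseteq> X \<and> Y \<in> M} \<in> {card Y | Y. Y \<subseteq> X \<and> Y \<in> M}" using Max_in[OF m(1) m(2)] .
  then show ?thesis using m(3) by auto
qed

lemma MP_empty: "{} \<in> MP d P" unfolding MP_def by simp

lemma MP_hyp:
  assumes P: "d_partition d UNIV P"
  shows "hyperplanes (MP d P) = P"
proof -
  let ?M = "MP d P"
  have E: "{} \<in> ?M" by (rule MP_empty)
  have Bd: "\<forall>X\<in>?M. finite X \<and> card X \<le> d + 1" using MP_bound by blast
  note ge = mrank_ge[OF E Bd] and ex = mrank_ex[OF E Bd]
  have rU: "mrank ?M UNIV = d + 1"
  proof -
    obtain X where X: "X \<in> ?M" "card X = d + 1" using MP_large[OF P] by blast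
    have "d + 1 \<le> mrank ?M UNIV" using ge[of X UNIV] X by simp
    moreover obtain Y where "Y \<in> ?M" "card Y = mrank ?M UNIV" using ex[of UNIV] by blast
    then have "mrank ?M UNIV \<le> d + 1" using Bd by (metis le_trans order_refl)
    ultimately show ?thesis by simp
  qed
  have blockrank: "mrank ?M B = d" if B: "B \<in> P" for B
  proof -
    obtain S where S: "S \<subseteq> B" "finite S" "card S = d" using dsub[OF P B] by blast
    have "S \<in> ?M" unfolding MP_def using S by simp
    then have "d \<le> mrank ?M B" using ge[of S B] S by simp
    moreover obtain Y where Y: "Y \<subseteq> B" "Y \<in> ?M" "card Y = mrank ?M B" using ex[of B] by blast
    have "card Y \<le> d"
    proof (rule ccontr)
      assume "\<not> card Y \<le> d"
      then have "\<not> (\<exists>B\<in>P. Y \<subseteq> B)" using Y(2) unfolding MP_def by auto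
      then show False using Y B by blast
    qed
    ultimately show ?thesis using Y by simp
  qed
  have big: "d + 1 \<le> mrank ?M H'" if B: "B \<in> P" and H': "B \<subset> H'" for B H'
  proof -
    obtain S where S: "S \<subseteq> B" "finite S" "card S = d" using dsub[OF P B] by blast
    obtain x where x: "x \<in> H'" "x \<notin> B" using H' by blast
    have i: "insert x S \<in> ?M" using MP_K[OF P B S(1) S(2) S(3) x(2)] .
    have "x \<notin> S" using x S by blast
    then have c: "card (insert x S) = d + 1" using S by simp
    have "insert x S \<subseteq> H'" using x S H' by blast
    then have "card (insert x S) \<le> mrank ?M H'" using ge i by blast
    then show ?thesis using c by simp
  qed
  show ?thesis
  proof (intro equalityI subsetI)
    fix H assume "H \<in> hyperplanes ?M"
    then have H1: "mrank ?M H = d" and H2: "\<And>H'. H \<subset> H' \<Longrightarrow> mrank ?M H' \<noteq> d"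
      unfolding hyperplanes_def rU by auto
    obtain S where S0: "S \<subseteq> H" "S \<in> ?M" "card S = mrank ?M H" using ex[of H] by blast
    then have S: "S \<subseteq> H" "S \<in> ?M" "card S = d" using H1 by auto
    have fS: "finite S" using bspec[OF Bd S(2)] by simp
    obtain B where B: "B \<in> P" "S \<subseteq> B" using dp_ex[OF P fS S(3)] by blast
    have HB: "H \<subseteq> B"
    proof
      fix x assume xH: "x \<in> H"
      show "x \<in> B"
      proof (rule ccontr)
        assume xB: "x \<notin> B"
        have i: "insert x S \<in> ?M" using MP_K[OF P B(1) B(2) fS S(3) xB] .
        have "x \<notin> S" using xB B by blast
        then have c: "card (insert x S) = d + 1" using S fS by simp
        have "insert x S \<subseteq> H" using xH S by blast
        then have "card (insert x S) \<le> mrank ?M H" using ge i by blast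
        then have "d + 1 \<le> mrank ?M H" using c by simp
        then show False using H1 by simp
      qed
    qed
    have "H = B"
    proof (rule ccontr)
      assume "H \<noteq> B" then have "H \<subset> B" using HB by blast
      then show False using H2[OF \<open>H \<subset> B\<close>] blockrank[OF B(1)] by simp
    qed
    then show "H \<in> P" using B by simp
  next
    fix B assume B: "B \<in> P"
    have "mrank ?M B = d" using blockrank[OF B] .
    moreover have "\<forall>H'. B \<subset> H' \<longrightarrow> mrank ?M H' \<noteq> d"
    proof (intro allI impI)
      fix H' assume "B \<subset> H'"
      then have "d + 1 \<le> mrank ?M H'" using big[OF B] by blast
      then show "mrank ?M H' \<noteq> d" by simp
    qed
    ultimately show "B \<in> hyperplanes ?M" unfolding hyperplanes_def rU by simp
  qed
qed

lemma mrank_translate: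
  fixes M :: "(int ^ ('n::finite)) set set"
  assumes TI: "translation_invariant M"
  shows "mrank M (translate u X) = mrank M X"
proof -
  have "{card Y | Y. Y \<subseteq> translate u X \<and> Y \<in> M} = {card Y | Y. Y \<subseteq> X \<and> Y \<in> M}"
  proof (intro equalityI subsetI)
    fix k assume "k \<in> {card Y | Y. Y \<subseteq> translate u X \<and> Y \<in> M}"
    then obtain Y where Y: "k = card Y" "Y \<subseteq> translate u X" "Y \<in> M" by blast
    have "translate (-u) Y \<subseteq> X" using translate_mono[OF Y(2), of "-u"] translate_neg[of u X] by simp
    moreover have "translate (-u) Y \<in> M" using ti_mem[OF TI] Y(3) by blast
    moreover have "card (translate (-u) Y) = k" using Y(1) card_translate by simp
    ultimately show "k \<in> {card Y | Y. Y \<subseteq> X \<and> Y \<in> M}" by blast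
  next
    fix k assume "k \<in> {card Y | Y. Y \<subseteq> X \<and> Y \<in> M}"
    then obtain Y where Y: "k = card Y" "Y \<subseteq> X" "Y \<in> M" by blast
    have "translate u Y \<subseteq> translate u X" using translate_mono[OF Y(2)] .
    moreover have "translate u Y \<in> M" using ti_mem[OF TI] Y(3) by blast
    moreover have "card (translate u Y) = k" using Y(1) card_translate by simp
    ultimately show "k \<in> {card Y | Y. Y \<subseteq> translate u X \<and> Y \<in> M}" by blast
  qed
  then show ?thesis unfolding mrank_def by simp
qed

lemma hyp_ti:
  fixes M :: "(int ^ ('n::finite)) set set"
  assumes TI: "translation_invariant M"
  shows "translation_invariant (hyperplanes M)"
proof (rule ti_intro)
  fix u H assume H: "H \<in> hyperplanes M"
  then have H1: "mrank M H = mrank M UNIV - 1" and H2: "\<And>H'. H \<subset> H' \<Longrightarrow> mrank M H' \<noteq> mrank M UNIV - 1"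
    unfolding hyperplanes_def by auto
  have a: "mrank M (translate u H) = mrank M UNIV - 1" using H1 mrank_translate[OF TI] by simp
  have b: "mrank M H' \<noteq> mrank M UNIV - 1" if H': "translate u H \<subset> H'" for H'
  proof -
    have "H \<subseteq> translate (-u) H'" using translate_mono[of "translate u H" H' "-u"] H' translate_neg[of u H] by auto
    moreover have "H \<noteq> translate (-u) H'"
    proof
      assume "H = translate (-u) H'"
      then have "translate u H = H'" using translate_neg2[of u H'] by simp
      then show False using H' by simp
    qed
    ultimately have "H \<subset> translate (-u) H'" by blast
    then have "mrank M (translate (-u) H') \<noteq> mrank M UNIV - 1" using H2 by blast
    then show ?thesis using mrank_translate[OF TI] by simp
  qed
  show "translate u H \<in> hyperplanes M" unfolding hyperplanes_def using a b by blast
qed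



definition cl :: "'a set set \<Rightarrow> 'a set \<Rightarrow> 'a set" where
  "cl M S = S \<union> {x. insert x S \<notin> M}"

definition blocks :: "nat \<Rightarrow> 'a set set \<Rightarrow> 'a set set" where
  "blocks d M = {cl M S | S. finite S \<and> card S = d}"

lemma blocksI: "finite S \<Longrightarrow> card S = d \<Longrightarrow> cl M S \<in> blocks d M"
  unfolding blocks_def by blast

lemma cl_sup: "S \<subseteq> cl M S"
  unfolding cl_def by blast

locale pav =
  fixes M :: "'a set set" and d :: nat
  assumes FM: "finitary_matroid M"
    and R: "has_rank M (d + 1)"
    and CC: "\<forall>C\<in>circuits M. finite C \<and> (card C = d + 1 \<or> card C = d + 1 + 1)"
    and d1: "d \<ge> 1"
begin

lemma small: assumes "finite X" "card X \<le> d" shows "X \<in> M"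
proof (rule ccontr)
  assume "X \<notin> M"
  then obtain C where C: "C \<in> circuits M" "C \<subseteq> X" using dep_contains_circuit[OF FM] assms(1) by blast
  have "card C \<le> card X" using card_mono[OF assms(1) C(2)] .
  moreover have "card C \<ge> d + 1" using bspec[OF CC C(1)] by auto
  ultimately show False using assms(2) by simp
qed

lemma ibound: "X \<in> M \<Longrightarrow> finite X \<and> card X \<le> d + 1"
  using R unfolding has_rank_def by blast

lemma Rlem:
  assumes T: "finite T" "card T = d" and S: "finite S" "S \<subseteq> cl M T"
    and J: "J \<subseteq> S \<union> T" "J \<in> M"
  shows "card J \<le> d"
proof (rule ccontr)
  assume "\<not> card J \<le> d"
  then have lt: "card T < card J" using T by simp
  have TM: "T \<in> M" using small T by simp
  have fJ: "finite J" using ibound J(2) by blast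
  obtain y where y: "y \<in> J - T" "insert y T \<in> M" using fm_aug[OF FM TM J(2) T(1) fJ lt] by blast
  then have "y \<in> cl M T" "y \<notin> T" using J S by blast+
  then have "insert y T \<notin> M" unfolding cl_def by blast
  then show False using y by blast
qed

lemma cl_sub:
  assumes T: "finite T" "card T = d" and S: "finite S" "card S = d" and ST: "S \<subseteq> cl M T"
  shows "cl M S \<subseteq> cl M T"
proof
  fix x assume x: "x \<in> cl M S"
  show "x \<in> cl M T"
  proof (cases "x \<in> S")
    case True then show ?thesis using ST by blast
  next
    case False
    then have xd: "insert x S \<notin> M" using x unfolding cl_def by blast
    show ?thesis
    proof (rule ccontr)
      assume "x \<notin> cl M T"
      then have xT: "x \<notin> T" "insert x T \<in> M" unfolding cl_def by blast+
      have SM: "S \<in> M" using small S by simp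
      have lt: "card S < card (insert x T)" using T S xT by simp
      obtain y where y: "y \<in> insert x T - S" "insert y S \<in> M"
        using fm_aug[OF FM SM xT(2) S(1) _ lt] T by blast
      have "y \<noteq> x" using y xd by blast
      then have yT: "y \<in> T" "y \<notin> S" using y by blast+
      have "insert y S \<subseteq> S \<union> T" using yT by blast
      then have "card (insert y S) \<le> d" using Rlem[OF T S(1) ST _ y(2)] by blast
      then show False using yT S by simp
    qed
  qed
qed

lemma T_sub:
  assumes T: "finite T" "card T = d" and S: "finite S" "card S = d" and ST: "S \<subseteq> cl M T"
  shows "T \<subseteq> cl M S"
proof
  fix t assume t: "t \<in> T"
  show "t \<in> cl M S"
  proof (cases "t \<in> S")
    case True then show ?thesis unfolding cl_def by blast
  next
    case False
    show ?thesis
    proof (rule ccontr)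
      assume "t \<notin> cl M S"
      then have i: "insert t S \<in> M" unfolding cl_def by blast
      have "insert t S \<subseteq> S \<union> T" using t by blast
      then have "card (insert t S) \<le> d" using Rlem[OF T S(1) ST _ i] by blast
      then show False using False S by simp
    qed
  qed
qed

lemma cl_eq:
  assumes T: "finite T" "card T = d" and S: "finite S" "card S = d" and ST: "S \<subseteq> cl M T"
  shows "cl M S = cl M T"
proof
  show "cl M S \<subseteq> cl M T" using cl_sub[OF T S ST] .
  have "T \<subseteq> cl M S" using T_sub[OF T S ST] .
  then show "cl M T \<subseteq> cl M S" using cl_sub[OF S T] by blast
qed

lemma blocks_dp: "d_partition d UNIV (blocks d M)"
  unfolding d_partition_def
proof (intro conjI ballI allI impI)
  obtain X where X: "X \<in> M" "finite X" "card X = d + 1" using R unfolding has_rank_def by blast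
  show "infinite (UNIV :: 'a set) \<or> d + 1 \<le> card (UNIV :: 'a set)"
  proof (cases "finite (UNIV :: 'a set)")
    case True then show ?thesis using card_mono[OF True, of X] X by simp
  qed simp
next
  fix B assume "B \<in> blocks d M" then show "B \<subseteq> UNIV" by simp
next
  obtain X where X: "X \<in> M" "finite X" "card X = d + 1" using R unfolding has_rank_def by blast
  then have "X \<noteq> {}" by auto
  then obtain b1 where b1: "b1 \<in> X" by blast
  have cXb: "card (X - {b1}) = d" using X b1 by simp
  have "X - {b1} \<noteq> {}"
  proof
    assume "X - {b1} = {}"
    then have "card (X - {b1}) = 0" by (simp only: card.empty)
    then show False using d1 cXb by simp
  qed
  then obtain b2 where b2: "b2 \<in> X" "b2 \<noteq> b1" by blast
  define S where "S = X - {b1}"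
  define T where "T = X - {b2}"
  have S: "finite S" "card S = d" unfolding S_def using X b1 by auto
  have T: "finite T" "card T = d" unfolding T_def using X b2 by auto
  have "b1 \<in> cl M T" unfolding T_def cl_def using b1 b2 by blast
  moreover have "b1 \<notin> cl M S"
  proof
    assume "b1 \<in> cl M S"
    moreover have "b1 \<notin> S" unfolding S_def by blast
    ultimately have "insert b1 S \<notin> M" unfolding cl_def by blast
    moreover have "insert b1 S = X" unfolding S_def using b1 by blast
    ultimately show False using X by simp
  qed
  ultimately have "cl M S \<noteq> cl M T" by blast
  moreover have "cl M S \<in> blocks d M" "cl M T \<in> blocks d M" using blocksI S T by auto
  ultimately show "\<exists>A\<in>blocks d M. \<exists>B\<in>blocks d M. A \<noteq> B" by blast
next
  fix B assume "B \<in> blocks d M"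
  then obtain S where S: "finite S" "card S = d" "B = cl M S" unfolding blocks_def by blast
  have SB: "S \<subseteq> B" unfolding S(3) by (rule cl_sup)
  show "infinite B \<or> d \<le> card B"
  proof (cases "finite B")
    case True then have "card S \<le> card B" using card_mono SB by blast
    then show ?thesis using S by simp
  qed simp
next
  fix S :: "'a set" assume S: "S \<subseteq> UNIV \<and> finite S \<and> card S = d"
  show "\<exists>!B. B \<in> blocks d M \<and> S \<subseteq> B"
  proof (rule ex1I[of _ "cl M S"])
    show "cl M S \<in> blocks d M \<and> S \<subseteq> cl M S" using blocksI[of S d M] cl_sup[of S M] S by simp
  next
    fix B assume B: "B \<in> blocks d M \<and> S \<subseteq> B"
    then obtain T where T: "finite T" "card T = d" "B = cl M T" unfolding blocks_def by blast
    have "S \<subseteq> cl M T" using B T(3) by simp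
    then have "cl M S = cl M T" using cl_eq[OF T(1) T(2)] S by simp
    then show "B = cl M S" using T(3) by simp
  qed
qed

lemma M_eq_MP: "M = MP d (blocks d M)"
proof (intro equalityI subsetI)
  fix X assume X: "X \<in> M"
  have fX: "finite X" and cX: "card X \<le> d + 1" using ibound[OF X] by auto
  show "X \<in> MP d (blocks d M)"
  proof (cases "card X \<le> d")
    case True then show ?thesis unfolding MP_def using fX by simp
  next
    case False
    then have c: "card X = d + 1" using cX by simp
    have "\<not> (\<exists>B\<in>blocks d M. X \<subseteq> B)"
    proof
      assume "\<exists>B\<in>blocks d M. X \<subseteq> B"
      then obtain T where T: "finite T" "card T = d" "X \<subseteq> cl M T" unfolding blocks_def by blast
      have "X \<noteq> {}" using c by auto
      then obtain x where x: "x \<in> X" by blast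
      define S where "S = X - {x}"
      have S: "finite S" "card S = d" unfolding S_def using fX c x by auto
      have "S \<subseteq> cl M T" using T unfolding S_def by blast
      then have "cl M S = cl M T" using cl_eq[OF T(1) T(2) S] by blast
      then have "x \<in> cl M S" using T x by blast
      moreover have "x \<notin> S" unfolding S_def by blast
      ultimately have "insert x S \<notin> M" unfolding cl_def by blast
      moreover have "insert x S = X" unfolding S_def using x by blast
      ultimately show False using X by simp
    qed
    then show ?thesis unfolding MP_def using fX c by simp
  qed
next
  fix X assume X: "X \<in> MP d (blocks d M)"
  then have fX: "finite X" and cases: "card X \<le> d \<or> (card X = d + 1 \<and> \<not> (\<exists>B\<in>blocks d M. X \<subseteq> B))"
    unfolding MP_def by auto
  show "X \<in> M"
  proof (cases "card X \<le> d")
    case True then show ?thesis using small fX by simp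
  next
    case False
    then have c: "card X = d + 1" and nb: "\<not> (\<exists>B\<in>blocks d M. X \<subseteq> B)" using cases by auto
    show ?thesis
    proof (rule ccontr)
      assume XM: "X \<notin> M"
      have "X \<noteq> {}" using c by auto
      then obtain x where x: "x \<in> X" by blast
      define S where "S = X - {x}"
      have S: "finite S" "card S = d" unfolding S_def using fX c x by auto
      have "insert x S = X" unfolding S_def using x by blast
      then have "x \<in> cl M S" unfolding cl_def using XM by simp
      then have "X \<subseteq> cl M S" unfolding S_def cl_def by blast
      moreover have "cl M S \<in> blocks d M" unfolding blocks_def using S by blast
      ultimately show False using nb by blast
    qed
  qed
qed

end



lemma paving_pav:
  assumes d1: "d \<ge> 1" and Pv: "paving_tropical_ideal_of_degree I (d + 1)"
  shows "tropical_ideal I" "pav (underlying_matroid I) d"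
proof -
  have z: "zero_dim_of_degree I (d + 1)"
    and cc: "\<forall>C\<in>circuits (underlying_matroid I). finite C \<and> (card C = d + 1 \<or> card C = d + 1 + 1)"
    using Pv unfolding paving_tropical_ideal_of_degree_def by auto
  show T: "tropical_ideal I" using z unfolding zero_dim_of_degree_def by simp
  have r: "has_rank (underlying_matroid I) (d + 1)" using z unfolding zero_dim_of_degree_def by simp
  show "pav (underlying_matroid I) d"
    unfolding pav_def using trop_fm[OF T] r cc d1 by blast
qed

lemma paving_hyp:
  assumes d1: "d \<ge> 1" and Pv: "paving_tropical_ideal_of_degree I (d + 1)"
  shows "d_partition d UNIV (hyperplanes (underlying_matroid I))"
    "underlying_matroid I = MP d (hyperplanes (underlying_matroid I))"
proof -
  interpret pav "underlying_matroid I" d using paving_pav[OF d1 Pv] by blast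
  have dp: "d_partition d UNIV (blocks d (underlying_matroid I))" by (rule blocks_dp)
  have e: "underlying_matroid I = MP d (blocks d (underlying_matroid I))" by (rule M_eq_MP)
  have h: "hyperplanes (underlying_matroid I) = blocks d (underlying_matroid I)"
    using MP_hyp[OF dp] e by simp
  show "d_partition d UNIV (hyperplanes (underlying_matroid I))" using dp h by simp
  show "underlying_matroid I = MP d (hyperplanes (underlying_matroid I))" using e h by simp
qed

theorem part2:
  assumes d1: "(d::nat) \<ge> 1"
  shows "bij_betw (\<lambda>I :: 'n::finite lpoly set. hyperplanes (underlying_matroid I))
              {I. paving_tropical_ideal_of_degree I (d + 1)}
              {P. d_partition d UNIV P \<and> translation_invariant P}"
  unfolding bij_betw_def
proof
  show "inj_on (\<lambda>I :: 'n::finite lpoly set. hyperplanes (underlying_matroid I))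
              {I. paving_tropical_ideal_of_degree I (d + 1)}"
  proof (rule inj_onI)
    fix I J :: "'n lpoly set"
    assume I: "I \<in> {I. paving_tropical_ideal_of_degree I (d + 1)}"
      and J: "J \<in> {I. paving_tropical_ideal_of_degree I (d + 1)}"
      and h: "hyperplanes (underlying_matroid I) = hyperplanes (underlying_matroid J)"
    have PI: "paving_tropical_ideal_of_degree I (d + 1)" using I by simp
    have PJ: "paving_tropical_ideal_of_degree J (d + 1)" using J by simp
    have "underlying_matroid I = underlying_matroid J"
      using paving_hyp(2)[OF d1 PI] paving_hyp(2)[OF d1 PJ] h by simp
    moreover have "tropical_ideal I" "tropical_ideal J"
      using paving_pav(1)[OF d1 PI] paving_pav(1)[OF d1 PJ] by auto
    ultimately show "I = J" using trop_ideal_of[of I] trop_ideal_of[of J] by simp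
  qed
next
  show "(\<lambda>I :: 'n::finite lpoly set. hyperplanes (underlying_matroid I)) `
              {I. paving_tropical_ideal_of_degree I (d + 1)} =
              {P. d_partition d UNIV P \<and> translation_invariant P}"
  proof (intro equalityI subsetI)
    fix P assume "P \<in> (\<lambda>I :: 'n::finite lpoly set. hyperplanes (underlying_matroid I)) `
              {I. paving_tropical_ideal_of_degree I (d + 1)}"
    then obtain I :: "'n lpoly set" where PI: "paving_tropical_ideal_of_degree I (d + 1)"
      and P: "P = hyperplanes (underlying_matroid I)" by blast
    have "d_partition d UNIV P" using paving_hyp(1)[OF d1 PI] P by simp
    moreover have "translation_invariant P"
      using hyp_ti[OF trop_ti[OF paving_pav(1)[OF d1 PI]]] P by simp
    ultimately show "P \<in> {P. d_partition d UNIV P \<and> translation_invariant P}" by simp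
  next
    fix P :: "(int ^ 'n) set set" assume "P \<in> {P. d_partition d UNIV P \<and> translation_invariant P}"
    then have dp: "d_partition d UNIV P" and ti: "translation_invariant P" by auto
    let ?M = "MP d P"
    have fm: "finitary_matroid ?M" by (rule MP_fm[OF dp])
    have tim: "translation_invariant ?M" by (rule MP_ti[OF ti])
    define I where "I = ideal_of ?M"
    have T: "tropical_ideal I" unfolding I_def by (rule ideal_of_trop[OF fm tim])
    have UM: "underlying_matroid I = ?M" unfolding I_def by (rule um_ideal_of[OF fm])
    have "paving_tropical_ideal_of_degree I (d + 1)"
      unfolding paving_tropical_ideal_of_degree_def zero_dim_of_degree_def UM
      using T MP_rank[OF dp] MP_circuits[of _ d P] by blast
    moreover have "P = hyperplanes (underlying_matroid I)" using UM MP_hyp[OF dp] by simp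
    ultimately show "P \<in> (\<lambda>I :: 'n::finite lpoly set. hyperplanes (underlying_matroid I)) `
              {I. paving_tropical_ideal_of_degree I (d + 1)}" by blast
  qed
qed

theorem mainTheorem3:
  shows "bij_betw (underlying_matroid :: 'n::finite lpoly set \<Rightarrow> _)
            {I. tropical_ideal I}
            {M. finitary_matroid M \<and> translation_invariant M}
       \<and> (\<forall>d::nat. d \<ge> 1 \<longrightarrow>
            bij_betw (\<lambda>I :: 'n lpoly set. hyperplanes (underlying_matroid I))
              {I. paving_tropical_ideal_of_degree I (d + 1)}
              {P. d_partition d UNIV P \<and> translation_invariant P})"
  using part1 part2 by blast


end
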